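(* Let $\Gamma$ be a triangulation of a connected closed surface $M$ and let $\tau$ be a $z$-orientation of $\Gamma$. Then every face of $\Gamma$ satisfies exactly one of the following: (I) the face contains two edges of type I and its third edge is of type II; (II) all three edges of the face are of type II and, with their directions, they form a directed cycle.
   Context: Let $M$ be a connected closed $2$-dimensional surface (not necessarily orientable). A triangulation of $M$ is a $2$-cell embedding of a connected simple finite graph in $M$ such that every face is a triangle; then every edge lies in exactly two distinct faces, and two distinct faces meet in an edge, in a vertex, or not at all. A zigzag in a triangulation $\Gamma$ is a sequence of edges $(e_i)_{i\in\mathbb N}$ such that for every $i$: $e_i$ and $e_{i+1}$ are distinct edges of a common face; the face containing $e_i,e_{i+1}$ is different from the face containing $e_{i+1},e_{i+2}$; and $e_i$, $e_{i+2}$ have no common vertex. Such a sequence is periodic and is regarded as a cyclic sequence $e_1,\dots,e_n$ ($n$ the minimal period); a zigzag passes through each of its edges in a definite direction (from the vertex shared with the previous edge to the vertex shared with the next). The reversed sequence $Z^{-1}$ is again a zigzag and $Z\neq Z^{-1}$. If $\Gamma$ has exactly $k$ zigzags up to reversal, a $z$-orientation of $\Gamma$ is a set $\tau$ of $k$ zigzags containing exactly one of $Z,Z^{-1}$ for every zigzag $Z$. For a $z$-orientation $\tau$, each edge $e$ either occurs twice in one zigzag of $\tau$ and in no other, or occurs once in each of exactly two distinct zigzags of $\tau$ and in no other. The edge $e$ is of type I if these two passages through $e$ are in opposite directions, and of type II if they are in the same direction; edges of type II are regarded as directed edges with this common direction. *)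

theory Defs
  imports Main
begin

definition tri_edges :: "'v set set \<Rightarrow> 'v set set" where
  "tri_edges Fs = {e. card e = 2 \<and> (\<exists>F\<in>Fs. e \<subseteq> F)}"

definition triangulation :: "'v set \<Rightarrow> 'v set set \<Rightarrow> bool" where
  "triangulation V Fs \<longleftrightarrow>
     finite V \<and> Fs \<noteq> {} \<and>
     (\<forall>F\<in>Fs. F \<subseteq> V \<and> card F = 3) \<and>
     (\<forall>v\<in>V. \<exists>F\<in>Fs. v \<in> F) \<and>
     (\<forall>e\<in>tri_edges Fs. card {F\<in>Fs. e \<subseteq> F} = 2) \<and>
     \<comment> \<open>the link of every vertex is connected (hence a single cycle): closed surface\<close>
     (\<forall>v\<in>V. \<forall>x y. {v,x} \<in> tri_edges Fs \<and> {v,y} \<in> tri_edges Fs \<longrightarrow>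
          (\<lambda>p q. {v,p,q} \<in> Fs)\<^sup>*\<^sup>* x y) \<and>
     \<comment> \<open>connectedness\<close>
     (\<forall>u\<in>V. \<forall>w\<in>V. (\<lambda>x y. {x,y} \<in> tri_edges Fs)\<^sup>*\<^sup>* u w)"

text \<open>Zigzags, represented as bi-infinite (periodic) sequences of edges indexed by int;
  a zigzag as a cyclic sequence corresponds to the set of all its shifts.\<close>

definition is_zigzag :: "'v set set \<Rightarrow> (int \<Rightarrow> 'v set) \<Rightarrow> bool" where
  "is_zigzag Fs z \<longleftrightarrow>
     (\<forall>i. z i \<in> tri_edges Fs \<and> z i \<noteq> z (i+1) \<and>
          (\<exists>F\<in>Fs. z i \<subseteq> F \<and> z (i+1) \<subseteq> F) \<and>
          z i \<union> z (i+1) \<noteq> z (i+1) \<union> z (i+2) \<and>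
          z i \<inter> z (i+2) = {})"

definition zshift :: "int \<Rightarrow> (int \<Rightarrow> 'v set) \<Rightarrow> int \<Rightarrow> 'v set" where
  "zshift k z = (\<lambda>i. z (i + k))"

definition zrev :: "(int \<Rightarrow> 'v set) \<Rightarrow> int \<Rightarrow> 'v set" where
  "zrev z = (\<lambda>i. z (- i))"

definition z_orientation :: "'v set set \<Rightarrow> (int \<Rightarrow> 'v set) set \<Rightarrow> bool" where
  "z_orientation Fs T \<longleftrightarrow>
     (\<forall>z\<in>T. is_zigzag Fs z) \<and>
     (\<forall>z\<in>T. \<forall>k. zshift k z \<in> T) \<and>
     (\<forall>z. is_zigzag Fs z \<longrightarrow> (z \<in> T \<longleftrightarrow> zrev z \<notin> T))"

text \<open>Passages of T through edge e: the occurrences of e in zigzags of T, normalised to position 0.\<close>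

definition passages :: "(int \<Rightarrow> 'v set) set \<Rightarrow> 'v set \<Rightarrow> (int \<Rightarrow> 'v set) set" where
  "passages T e = {z\<in>T. z 0 = e}"

definition pdir :: "(int \<Rightarrow> 'v set) \<Rightarrow> 'v \<times> 'v" where
  "pdir z = (THE u. u \<in> z 0 \<inter> z (-1), THE v. v \<in> z 0 \<inter> z 1)"

definition edge_type_I :: "(int \<Rightarrow> 'v set) set \<Rightarrow> 'v set \<Rightarrow> bool" where
  "edge_type_I T e \<longleftrightarrow>
     (\<exists>z1 z2. z1 \<noteq> z2 \<and> passages T e = {z1, z2} \<and> pdir z1 \<noteq> pdir z2)"

definition edge_type_II :: "(int \<Rightarrow> 'v set) set \<Rightarrow> 'v set \<Rightarrow> bool" where
  "edge_type_II T e \<longleftrightarrow>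
     (\<exists>z1 z2. z1 \<noteq> z2 \<and> passages T e = {z1, z2} \<and> pdir z1 = pdir z2)"

definition type_II_directed :: "(int \<Rightarrow> 'v set) set \<Rightarrow> 'v set \<Rightarrow> 'v \<Rightarrow> 'v \<Rightarrow> bool" where
  "type_II_directed T e u v \<longleftrightarrow>
     (\<exists>z1 z2. z1 \<noteq> z2 \<and> passages T e = {z1, z2} \<and> pdir z1 = (u, v) \<and> pdir z2 = (u, v))"

end

theory Submission
  imports Defs
begin

lemma sub2_of3:
  assumes "card A = 2" "A \<subseteq> {x,y,w}"
  shows "A = {x,y} \<or> A = {y,w} \<or> A = {x,w}"
proof -
  obtain p q where "A = {p,q}" "p \<noteq> q" using assms(1) card_2_iff by metis
  then show ?thesis using assms(2) by auto
qed

locale zo =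
  fixes Fs :: "'v set set" and T :: "(int \<Rightarrow> 'v set) set"
  assumes card3: "\<And>F. F \<in> Fs \<Longrightarrow> card F = 3"
    and two: "\<And>e. e \<in> tri_edges Fs \<Longrightarrow> card {F\<in>Fs. e \<subseteq> F} = 2"
    and orient: "z_orientation Fs T"
begin

definition good3 where
  "good3 A B C \<longleftrightarrow> A \<in> tri_edges Fs \<and> B \<in> tri_edges Fs \<and> C \<in> tri_edges Fs \<and>
     A \<noteq> B \<and> B \<noteq> C \<and> (\<exists>F\<in>Fs. A \<subseteq> F \<and> B \<subseteq> F) \<and> (\<exists>F\<in>Fs. B \<subseteq> F \<and> C \<subseteq> F) \<and>
     A \<union> B \<noteq> B \<union> C \<and> A \<inter> C = {}"

lemma good3_rev: "good3 A B C \<Longrightarrow> good3 C B A"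
  unfolding good3_def by (auto simp: Un_commute Int_commute)

lemma zig_iff: "is_zigzag Fs z \<longleftrightarrow> (\<forall>i. good3 (z i) (z (i+1)) (z (i+2)))"
proof
  assume H: "is_zigzag Fs z"
  show "\<forall>i. good3 (z i) (z (i+1)) (z (i+2))"
  proof
    fix i
    have a: "z i \<in> tri_edges Fs \<and> z i \<noteq> z (i+1) \<and>
          (\<exists>F\<in>Fs. z i \<subseteq> F \<and> z (i+1) \<subseteq> F) \<and>
          z i \<union> z (i+1) \<noteq> z (i+1) \<union> z (i+2) \<and> z i \<inter> z (i+2) = {}"
      using H unfolding is_zigzag_def by blast
    have b: "z (i+1) \<in> tri_edges Fs \<and> z (i+1) \<noteq> z (i+1+1) \<and>
          (\<exists>F\<in>Fs. z (i+1) \<subseteq> F \<and> z (i+1+1) \<subseteq> F)"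
      using H unfolding is_zigzag_def by blast
    have c: "z (i+2) \<in> tri_edges Fs"
      using H unfolding is_zigzag_def by blast
    have e: "i+1+1 = i+2" by simp
    show "good3 (z i) (z (i+1)) (z (i+2))" using a b c unfolding good3_def e by blast
  qed
next
  assume H: "\<forall>i. good3 (z i) (z (i+1)) (z (i+2))"
  show "is_zigzag Fs z" unfolding is_zigzag_def
  proof
    fix i
    show "z i \<in> tri_edges Fs \<and> z i \<noteq> z (i+1) \<and>
          (\<exists>F\<in>Fs. z i \<subseteq> F \<and> z (i+1) \<subseteq> F) \<and>
          z i \<union> z (i+1) \<noteq> z (i+1) \<union> z (i+2) \<and> z i \<inter> z (i+2) = {}"
      using H[rule_format, of i] unfolding good3_def by blast
  qed
qed

lemma edge2: "e \<in> tri_edges Fs \<Longrightarrow> card e = 2"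
  unfolding tri_edges_def by auto

lemma face3: assumes "F \<in> Fs" obtains x y w where "x\<noteq>y" "y\<noteq>w" "x\<noteq>w" "F = {x,y,w}"
  using card3[OF assms] card_3_iff by metis

lemma three_faces:
  assumes "e \<in> tri_edges Fs" "G1 \<in> Fs" "G2 \<in> Fs" "G3 \<in> Fs"
    "e \<subseteq> G1" "e \<subseteq> G2" "e \<subseteq> G3"
  shows "G1 = G2 \<or> G1 = G3 \<or> G2 = G3"
proof (rule ccontr)
  assume n: "\<not> ?thesis"
  let ?S = "{F\<in>Fs. e \<subseteq> F}"
  have c: "card ?S = 2" using two[OF assms(1)] .
  hence f: "finite ?S" by (metis card.infinite zero_neq_numeral)
  have "{G1,G2,G3} \<subseteq> ?S" using assms by auto
  hence "card {G1,G2,G3} \<le> 2" using card_mono[OF f] c by metis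
  moreover have "card {G1,G2,G3} = 3" using n by auto
  ultimately show False by simp
qed

lemma other_face:
  assumes "e \<in> tri_edges Fs" "G \<in> Fs" "e \<subseteq> G"
  obtains G' where "G' \<in> Fs" "e \<subseteq> G'" "G' \<noteq> G"
proof -
  let ?S = "{F\<in>Fs. e \<subseteq> F}"
  have c: "card ?S = 2" using two[OF assms(1)] .
  have "?S \<noteq> {G}" using c by auto
  moreover have "G \<in> ?S" using assms by auto
  ultimately obtain G' where "G' \<in> ?S" "G' \<noteq> G" by blast
  thus ?thesis using that by auto
qed

lemma shape:
  assumes "A \<in> tri_edges Fs" "B \<in> tri_edges Fs" "A \<noteq> B" "G \<in> Fs" "A \<subseteq> G" "B \<subseteq> G"
  obtains x y w where "x\<noteq>y" "y\<noteq>w" "x\<noteq>w" "A = {x,y}" "B = {y,w}" "G = {x,y,w}"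
proof -
  obtain p q r where d: "p\<noteq>q" "q\<noteq>r" "p\<noteq>r" and G: "G = {p,q,r}" using face3[OF assms(4)] by blast
  have A: "A = {p,q} \<or> A = {q,r} \<or> A = {p,r}" using sub2_of3[OF edge2[OF assms(1)], of p q r] assms(5) G by simp
  have B: "B = {p,q} \<or> B = {q,r} \<or> B = {p,r}" using sub2_of3[OF edge2[OF assms(2)], of p q r] assms(6) G by simp
  from A show ?thesis
  proof (elim disjE)
    assume a: "A = {p,q}"
    from B show ?thesis
    proof (elim disjE)
      assume "B = {p,q}" thus ?thesis using a assms(3) by simp
    next
      assume "B = {q,r}" thus ?thesis using a d G that[of p q r] by simp
    next
      assume "B = {p,r}" thus ?thesis using a d G that[of q p r] by (simp add: insert_commute)
    qed
  next
    assume a: "A = {q,r}"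
    from B show ?thesis
    proof (elim disjE)
      assume "B = {p,q}" thus ?thesis using a d G that[of r q p] by (simp add: insert_commute)
    next
      assume "B = {q,r}" thus ?thesis using a assms(3) by simp
    next
      assume "B = {p,r}" thus ?thesis using a d G that[of q r p] by (simp add: insert_commute)
    qed
  next
    assume a: "A = {p,r}"
    from B show ?thesis
    proof (elim disjE)
      assume "B = {p,q}" thus ?thesis using a d G that[of r p q] by (simp add: insert_commute)
    next
      assume "B = {q,r}" thus ?thesis using a d G that[of p r q] by (simp add: insert_commute)
    next
      assume "B = {p,r}" thus ?thesis using a assms(3) by simp
    qed
  qed
qed

lemma face_union:
  assumes "A \<in> tri_edges Fs" "B \<in> tri_edges Fs" "A \<noteq> B" "G \<in> Fs" "A \<subseteq> G" "B \<subseteq> G"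
  shows "G = A \<union> B"
proof -
  obtain x y w where "A = {x,y}" "B = {y,w}" "G = {x,y,w}" using shape[OF assms] by metis
  thus ?thesis by auto
qed


lemma tri_edgeI: "card e = 2 \<Longrightarrow> F \<in> Fs \<Longrightarrow> e \<subseteq> F \<Longrightarrow> e \<in> tri_edges Fs"
  unfolding tri_edges_def by blast

lemma good3_mk:
  assumes "x\<noteq>y" "y\<noteq>w" "x\<noteq>w" "{x,y,w} \<in> Fs" "{y,w,u} \<in> Fs" "u \<notin> {x,y,w}"
  shows "good3 {x,y} {y,w} {w,u}"
proof -
  have "{x,y} \<in> tri_edges Fs" using tri_edgeI[of "{x,y}" "{x,y,w}"] assms by auto
  moreover have "{y,w} \<in> tri_edges Fs" using tri_edgeI[of "{y,w}" "{x,y,w}"] assms by auto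
  moreover have "{w,u} \<in> tri_edges Fs" using tri_edgeI[of "{w,u}" "{y,w,u}"] assms by auto
  moreover have "{x,y} \<union> {y,w} \<noteq> {y,w} \<union> {w,u}" using assms by auto
  moreover have "{x,y} \<noteq> {y,w}" "{y,w} \<noteq> {w,u}" using assms by (auto simp: doubleton_eq_iff)
  moreover have "\<exists>F\<in>Fs. {x,y} \<subseteq> F \<and> {y,w} \<subseteq> F" by (rule bexI[of _ "{x,y,w}"]) (use assms in auto)
  moreover have "\<exists>F\<in>Fs. {y,w} \<subseteq> F \<and> {w,u} \<subseteq> F" by (rule bexI[of _ "{y,w,u}"]) (use assms in auto)
  moreover have "{x,y} \<inter> {w,u} = {}" using assms by auto
  ultimately show ?thesis unfolding good3_def by simp
qed

lemma next_shape:
  assumes g: "good3 {x,y} {y,w} C" and d: "x\<noteq>y" "y\<noteq>w" "x\<noteq>w"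
  obtains u where "C = {w,u}" "u \<notin> {x,y,w}" "{y,w,u} \<in> Fs"
proof -
  obtain G' where G': "G' \<in> Fs" "{y,w} \<subseteq> G'" "C \<subseteq> G'" using g unfolding good3_def by blast
  obtain p q r where pqr: "p\<noteq>q" "q\<noteq>r" "p\<noteq>r" "{y,w} = {p,q}" "C = {q,r}" "G' = {p,q,r}"
    using shape[of "{y,w}" C G'] g G' unfolding good3_def by metis
  have dis: "{x,y} \<inter> C = {}" using g unfolding good3_def by blast
  have "q \<noteq> y" using dis pqr by auto
  hence qw: "q = w" "p = y" using pqr(4) by (auto simp: doubleton_eq_iff)
  have "r \<noteq> x" using dis pqr by auto
  hence r: "r \<notin> {x,y,w}" using pqr qw by auto
  have "C = {w,r}" using pqr(5) qw by simp
  moreover have "{y,w,r} \<in> Fs" using G'(1) pqr(6) qw by simp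
  ultimately show ?thesis using that r by blast
qed

lemma good3_det:
  assumes "good3 A B C1" "good3 A B C2" shows "C1 = C2"
proof -
  obtain G where G: "G \<in> Fs" "A \<subseteq> G" "B \<subseteq> G" using assms(1) unfolding good3_def by blast
  obtain x y w where s: "x\<noteq>y" "y\<noteq>w" "x\<noteq>w" "A = {x,y}" "B = {y,w}" "G = {x,y,w}"
    using shape[of A B G] G assms(1) unfolding good3_def by metis
  obtain u1 where u1: "C1 = {w,u1}" "u1 \<notin> {x,y,w}" "{y,w,u1} \<in> Fs"
    using next_shape[of x y w C1] assms(1) s by metis
  obtain u2 where u2: "C2 = {w,u2}" "u2 \<notin> {x,y,w}" "{y,w,u2} \<in> Fs"
    using next_shape[of x y w C2] assms(2) s by metis
  have e: "{y,w} \<in> tri_edges Fs" using assms(1) s unfolding good3_def by blast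
  have "G = {y,w,u1} \<or> G = {y,w,u2} \<or> {y,w,u1} = {y,w,u2}"
    using three_faces[OF e G(1) u1(3) u2(3)] s by auto
  moreover have "G \<noteq> {y,w,u1}" "G \<noteq> {y,w,u2}" using s u1 u2 by auto
  ultimately have "{y,w,u1} = {y,w,u2}" by blast
  hence "u1 = u2" using u1 u2 by auto
  thus ?thesis using u1 u2 by simp
qed

definition gp where
  "gp A B \<longleftrightarrow> A \<in> tri_edges Fs \<and> B \<in> tri_edges Fs \<and> A \<noteq> B \<and> (\<exists>G\<in>Fs. A \<subseteq> G \<and> B \<subseteq> G)"

lemma gp_sym: "gp A B \<Longrightarrow> gp B A" unfolding gp_def by blast

lemma good3_gp: "good3 A B C \<Longrightarrow> gp B C" unfolding good3_def gp_def by blast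

lemma good3_ex:
  assumes "gp A B" shows "\<exists>C. good3 A B C"
proof -
  obtain G where G: "G \<in> Fs" "A \<subseteq> G" "B \<subseteq> G" using assms unfolding gp_def by blast
  obtain x y w where s: "x\<noteq>y" "y\<noteq>w" "x\<noteq>w" "A = {x,y}" "B = {y,w}" "G = {x,y,w}"
    using shape[of A B G] G assms unfolding gp_def by metis
  obtain G' where G': "G' \<in> Fs" "B \<subseteq> G'" "G' \<noteq> G"
    using other_face[of B G] assms G unfolding gp_def by metis
  have c3: "card G' = 3" using card3 G'(1) .
  have "\<not> G' \<subseteq> {y,w}"
  proof
    assume "G' \<subseteq> {y,w}"
    hence "card G' \<le> card {y,w}" by (simp add: card_mono)
    also have "\<dots> \<le> 2" by (simp add: card_insert_le_m1)
    finally show False using c3 by simp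
  qed
  then obtain u where u: "u \<in> G'" "u \<noteq> y" "u \<noteq> w" by blast
  have sub: "{y,w,u} \<subseteq> G'" using u G' s by auto
  have "card {y,w,u} = 3" using u s by auto
  hence eq: "{y,w,u} = G'" using card_subset_eq[OF _ sub] c3 card.infinite by fastforce
  have "u \<noteq> x" using eq G' s by (auto simp: insert_commute)
  hence "good3 {x,y} {y,w} {w,u}" using good3_mk[of x y w u] s G eq G' u by auto
  thus ?thesis using s by blast
qed


lemma zig3: "is_zigzag Fs z \<Longrightarrow> j = i+1 \<Longrightarrow> k = i+2 \<Longrightarrow> good3 (z i) (z j) (z k)"
  using zig_iff by blast

lemma zig_det:
  assumes z1: "is_zigzag Fs z1" and z2: "is_zigzag Fs z2" and e0: "z1 0 = z2 0" and e1: "z1 1 = z2 1"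
  shows "z1 = z2"
proof -
  have fw: "z1 (int n) = z2 (int n) \<and> z1 (int n + 1) = z2 (int n + 1)" for n
  proof (induction n)
    case 0 then show ?case using e0 e1 by simp
  next
    case (Suc n)
    have g1: "good3 (z1 (int n)) (z1 (int n + 1)) (z1 (int n + 2))" using zig3[OF z1] by simp
    have g2: "good3 (z2 (int n)) (z2 (int n + 1)) (z2 (int n + 2))" using zig3[OF z2] by simp
    have "z1 (int n + 2) = z2 (int n + 2)" using good3_det g1 g2 Suc by metis
    moreover have "int (Suc n) + 1 = int n + 2" "int (Suc n) = int n + 1" by simp_all
    ultimately show ?case using Suc by metis
  qed
  have bw: "z1 (- int n) = z2 (- int n) \<and> z1 (- int n + 1) = z2 (- int n + 1)" for n
  proof (induction n)
    case 0 then show ?case using e0 e1 by simp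
  next
    case (Suc n)
    have g1: "good3 (z1 (- int n - 1)) (z1 (- int n)) (z1 (- int n + 1))" using zig3[OF z1, of "-int n" "-int n - 1" "-int n + 1"] by simp
    have g2: "good3 (z2 (- int n - 1)) (z2 (- int n)) (z2 (- int n + 1))" using zig3[OF z2, of "-int n" "-int n - 1" "-int n + 1"] by simp
    have "z1 (- int n - 1) = z2 (- int n - 1)" using good3_det good3_rev g1 g2 Suc by metis
    moreover have "- int (Suc n) = - int n - 1" "- int (Suc n) + 1 = - int n" by simp_all
    ultimately show ?case using Suc by metis
  qed
  show ?thesis
  proof
    fix i :: int
    show "z1 i = z2 i"
    proof (cases "0 \<le> i")
      case True then show ?thesis using fw[of "nat i"] by simp
    next
      case False then show ?thesis using bw[of "nat (-i)"] by simp
    qed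
  qed
qed

definition nx where "nx p = (snd p, SOME C. good3 (fst p) (snd p) C)"

lemma nx_good: "gp (fst p) (snd p) \<Longrightarrow> good3 (fst p) (snd p) (snd (nx p)) \<and> gp (fst (nx p)) (snd (nx p))"
proof -
  assume "gp (fst p) (snd p)"
  then obtain C where "good3 (fst p) (snd p) C" using good3_ex by blast
  hence g: "good3 (fst p) (snd p) (snd (nx p))" unfolding nx_def by (simp add: someI)
  thus ?thesis using good3_gp[OF g] unfolding nx_def by simp
qed

lemma zig_ex:
  assumes "gp A B" shows "\<exists>z. is_zigzag Fs z \<and> z 0 = A \<and> z 1 = B"
proof -
  define h where "h n = (nx ^^ n) (A,B)" for n
  define h' where "h' n = (nx ^^ n) (B,A)" for n
  have hS: "h (Suc n) = nx (h n)" "h' (Suc n) = nx (h' n)" for n unfolding h_def h'_def by simp_all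
  have fnx: "fst (nx p) = snd p" for p unfolding nx_def by simp
  have gh: "gp (fst (h n)) (snd (h n))" for n
    by (induction n) (auto simp: h_def assms nx_good)
  have gh': "gp (fst (h' n)) (snd (h' n))" for n
    by (induction n) (auto simp: h'_def assms gp_sym nx_good)
  define z where "z i = (if 0 \<le> i then fst (h (nat i)) else snd (h' (nat (-i))))" for i
  have zpos: "z (int n) = fst (h n)" for n unfolding z_def by simp
  have zneg: "z (- int n) = snd (h' n)" for n
    unfolding z_def by (cases "n = 0") (auto simp: h_def h'_def)
  have "good3 (z i) (z (i+1)) (z (i+2))" for i
  proof -
    consider "0 \<le> i" | "i = -1" | "i \<le> -2" by linarith
    then show ?thesis
    proof cases
      case 1
      then obtain n where n: "i = int n" by (metis nonneg_eq_int)
      have a: "z (i+1) = snd (h n)" using zpos[of "Suc n"] n hS fnx by (simp add: add.commute)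
      have b: "z (i+2) = snd (h (Suc n))" using zpos[of "Suc (Suc n)"] n hS fnx
        by (simp add: add.commute)
      show ?thesis using nx_good[OF gh[of n]] a b n zpos hS by simp
    next
      case 2
      have a: "z (-1) = snd (nx (B,A))" using zneg[of 1] by (simp add: h'_def)
      have b: "z 0 = A" "z 1 = B" using zpos[of 0] zpos[of 1] by (simp_all add: h_def fnx)
      have "good3 B A (snd (nx (B,A)))" using nx_good[of "(B,A)"] gp_sym[OF assms] by simp
      thus ?thesis using a b 2 good3_rev by simp
    next
      case 3
      define m where "m = nat (-i-2)"
      have m: "i = - int m - 2" using 3 unfolding m_def by simp
      have "i + 2 = - int m" using m by simp
      hence a: "z (i+2) = snd (h' m)" using zneg[of m] by metis
      have "i + 1 = - int (Suc m)" using m by simp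
      hence b: "z (i+1) = snd (h' (Suc m))" using zneg[of "Suc m"] by metis
      have "i = - int (Suc (Suc m))" using m by simp
      hence c: "z i = snd (h' (Suc (Suc m)))" using zneg[of "Suc (Suc m)"] by metis
      have "good3 (fst (h' (Suc m))) (snd (h' (Suc m))) (snd (nx (h' (Suc m))))"
        using nx_good[OF gh'[of "Suc m"]] by simp
      hence "good3 (z (i+2)) (z (i+1)) (z i)" using a b c hS fnx by simp
      thus ?thesis using good3_rev by blast
    qed
  qed
  hence "is_zigzag Fs z" using zig_iff by blast
  moreover have "z 0 = A" "z 1 = B" using zpos[of 0] zpos[of 1] by (simp_all add: h_def fnx)
  ultimately show ?thesis by blast
qed


lemma zig_shift: "is_zigzag Fs z \<Longrightarrow> is_zigzag Fs (zshift k z)"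
  unfolding zig_iff zshift_def
proof
  fix i assume "\<forall>i. good3 (z i) (z (i+1)) (z (i+2))"
  hence "good3 (z (i+k)) (z (i+k+1)) (z (i+k+2))" by blast
  thus "good3 (z (i+k)) (z (i+1+k)) (z (i+2+k))" by (simp add: ac_simps)
qed

lemma zig_rev: "is_zigzag Fs z \<Longrightarrow> is_zigzag Fs (zrev z)"
  unfolding zig_iff zrev_def
proof
  fix i assume "\<forall>i. good3 (z i) (z (i+1)) (z (i+2))"
  hence "good3 (z (-i-2)) (z (-i-2+1)) (z (-i-2+2))" by blast
  hence "good3 (z (-i-2)) (z (-(i+1))) (z (-i))" by (simp add: algebra_simps)
  thus "good3 (z (-i)) (z (-(i+1))) (z (-(i+2)))" using good3_rev by (simp add: algebra_simps)
qed

lemma shift_shift: "zshift a (zshift b z) = zshift (a+b) z"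
  unfolding zshift_def by (simp add: ac_simps)

lemma shift0: "zshift 0 z = z" unfolding zshift_def by simp

lemma T_zig: "z \<in> T \<Longrightarrow> is_zigzag Fs z" using orient unfolding z_orientation_def by blast

lemma T_shift: "z \<in> T \<Longrightarrow> zshift k z \<in> T" using orient unfolding z_orientation_def by blast

lemma T_shift_iff: "zshift k z \<in> T \<longleftrightarrow> z \<in> T"
  using T_shift[of "zshift k z" "-k"] T_shift[of z k] by (auto simp: shift_shift shift0)

lemma T_rev: "is_zigzag Fs z \<Longrightarrow> (z \<in> T \<longleftrightarrow> zrev z \<notin> T)"
  using orient unfolding z_orientation_def by blast

lemma pdir_fw:
  assumes z: "is_zigzag Fs z" and "z 0 = {x,y}" "z 1 = {y,w}" "x\<noteq>y" "y\<noteq>w" "x\<noteq>w"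
  shows "pdir z = (x,y)"
proof -
  have "good3 (z (-1)) (z 0) (z 1)" using zig3[OF z, of 0 "-1" 1] by simp
  hence "good3 {w,y} {y,x} (z (-1))" using good3_rev assms by (simp add: insert_commute)
  then obtain u where u: "z (-1) = {x,u}" "u \<notin> {w,y,x}" using next_shape[of w y x "z (-1)"] assms by metis
  have 1: "(THE t. t \<in> z 0 \<inter> z (-1)) = x" by (rule the_equality) (use assms u in auto)
  have 2: "(THE t. t \<in> z 0 \<inter> z 1) = y" by (rule the_equality) (use assms in auto)
  show ?thesis unfolding pdir_def 1 2 ..
qed

lemma pdir_bw:
  assumes z: "is_zigzag Fs z" and "z (-1) = {w,x}" "z 0 = {x,y}" "x\<noteq>y" "y\<noteq>w" "x\<noteq>w"
  shows "pdir z = (x,y)"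
proof -
  have "good3 (z (-1)) (z 0) (z 1)" using zig3[OF z, of 0 "-1" 1] by simp
  hence "good3 {w,x} {x,y} (z 1)" using assms by simp
  then obtain u where u: "z 1 = {y,u}" "u \<notin> {w,x,y}" using next_shape[of w x y "z 1"] assms by metis
  have 1: "(THE t. t \<in> z 0 \<inter> z (-1)) = x" by (rule the_equality) (use assms in auto)
  have 2: "(THE t. t \<in> z 0 \<inter> z 1) = y" by (rule the_equality) (use assms u in auto)
  show ?thesis unfolding pdir_def 1 2 ..
qed

definition Zp where "Zp x y w = (THE z. is_zigzag Fs z \<and> z 0 = {x,y} \<and> z 1 = {y,w})"

lemma Zp:
  assumes "x\<noteq>y" "y\<noteq>w" "x\<noteq>w" "{x,y,w} \<in> Fs"
  shows "is_zigzag Fs (Zp x y w) \<and> Zp x y w 0 = {x,y} \<and> Zp x y w 1 = {y,w}"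
proof -
  have e1: "{x,y} \<in> tri_edges Fs" using tri_edgeI[of "{x,y}" "{x,y,w}"] assms by simp
  have e2: "{y,w} \<in> tri_edges Fs" using tri_edgeI[of "{y,w}" "{x,y,w}"] assms by simp
  have e3: "{x,y} \<noteq> {y,w}" using assms by (simp add: doubleton_eq_iff)
  have e4: "\<exists>G\<in>Fs. {x,y} \<subseteq> G \<and> {y,w} \<subseteq> G" by (rule bexI[of _ "{x,y,w}"]) (use assms in auto)
  have "gp {x,y} {y,w}" unfolding gp_def using e1 e2 e3 e4 by simp
  then obtain z where z: "is_zigzag Fs z \<and> z 0 = {x,y} \<and> z 1 = {y,w}" using zig_ex by blast
  have "\<exists>!z. is_zigzag Fs z \<and> z 0 = {x,y} \<and> z 1 = {y,w}"
  proof (rule ex1I[of _ z])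
    fix z' assume "is_zigzag Fs z' \<and> z' 0 = {x,y} \<and> z' 1 = {y,w}"
    thus "z' = z" using zig_det[of z' z] z by simp
  qed (use z in simp)
  thus ?thesis unfolding Zp_def by (rule theI')
qed

lemma Zp_unique:
  assumes "is_zigzag Fs z" "z 0 = {x,y}" "z 1 = {y,w}" "x\<noteq>y" "y\<noteq>w" "x\<noteq>w" "{x,y,w} \<in> Fs"
  shows "z = Zp x y w"
  using zig_det[of z "Zp x y w"] Zp[of x y w] assms by auto

lemma Zp_rev:
  assumes d: "x\<noteq>y" "y\<noteq>w" "x\<noteq>w" and F: "{x,y,w} \<in> Fs"
  shows "zrev (Zp x y w) = zshift 1 (Zp w y x)"
proof -
  have Z: "is_zigzag Fs (Zp x y w)" "Zp x y w 0 = {x,y}" "Zp x y w 1 = {y,w}" using Zp[OF d F] by auto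
  have F': "{w,y,x} \<in> Fs" using F by (simp add: insert_commute)
  have zz: "is_zigzag Fs (zshift (-1) (zrev (Zp x y w)))" using zig_shift zig_rev Z(1) by blast
  have v0: "zshift (-1) (zrev (Zp x y w)) 0 = {w,y}" using Z(3) by (simp add: zshift_def zrev_def insert_commute)
  have v1: "zshift (-1) (zrev (Zp x y w)) 1 = {y,x}" using Z(2) by (simp add: zshift_def zrev_def insert_commute)
  have "zshift (-1) (zrev (Zp x y w)) = Zp w y x"
    using Zp_unique[OF zz v0 v1] d F' by auto
  hence "zshift 1 (zshift (-1) (zrev (Zp x y w))) = zshift 1 (Zp w y x)" by simp
  thus ?thesis by (simp add: shift_shift shift0)
qed

definition X where "X x y w \<longleftrightarrow> Zp x y w \<in> T"

lemma X_rev: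
  assumes d: "x\<noteq>y" "y\<noteq>w" "x\<noteq>w" and F: "{x,y,w} \<in> Fs"
  shows "X x y w \<longleftrightarrow> \<not> X w y x"
  using T_rev[of "Zp x y w"] Zp[OF d F] Zp_rev[OF d F] T_shift_iff unfolding X_def by auto

lemma passage_cases:
  assumes d: "x\<noteq>y" "y\<noteq>w" "x\<noteq>w" and F: "{x,y,w} \<in> Fs" and zT: "z \<in> T" and z0: "z 0 = {x,y}"
  shows "z = Zp x y w \<or> z = Zp y x w \<or> z = zshift 1 (Zp w x y) \<or> z = zshift 1 (Zp w y x)"
proof -
  have z: "is_zigzag Fs z" using T_zig zT .
  have g: "good3 (z (-1)) (z 0) (z 1)" using zig3[OF z, of 0 "-1" 1] by simp
  obtain Gm where Gm: "Gm \<in> Fs" "z (-1) \<subseteq> Gm" "z 0 \<subseteq> Gm" using g unfolding good3_def by blast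
  obtain Gp where Gp: "Gp \<in> Fs" "z 0 \<subseteq> Gp" "z 1 \<subseteq> Gp" using g unfolding good3_def by blast
  have Gmu: "Gm = z (-1) \<union> z 0" using face_union[of "z (-1)" "z 0" Gm] g Gm unfolding good3_def by blast
  have Gpu: "Gp = z 0 \<union> z 1" using face_union[of "z 0" "z 1" Gp] g Gp unfolding good3_def by blast
  have ne: "Gm \<noteq> Gp" using g Gmu Gpu unfolding good3_def by blast
  have e: "{x,y} \<in> tri_edges Fs" using g z0 unfolding good3_def by simp
  have "{x,y,w} = Gm \<or> {x,y,w} = Gp"
    using three_faces[OF e F Gm(1) Gp(1)] Gm Gp z0 ne by auto
  thus ?thesis
  proof
    assume "{x,y,w} = Gp"
    hence s: "z 1 \<subseteq> {x,y,w}" using Gp by simp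
    have c: "card (z 1) = 2" using g edge2 unfolding good3_def by blast
    have "z 0 \<noteq> z 1" using g unfolding good3_def by simp
    hence "z 1 \<noteq> {x,y}" using z0 by simp
    hence "z 1 = {y,w} \<or> z 1 = {x,w}" using sub2_of3[OF c s] by blast
    thus ?thesis
    proof
      assume "z 1 = {y,w}" thus ?thesis using Zp_unique[OF z z0 _ d F] by simp
    next
      assume "z 1 = {x,w}"
      moreover have "{y,x,w} \<in> Fs" using F by (simp add: insert_commute)
      moreover have "z 0 = {y,x}" using z0 by (simp add: insert_commute)
      ultimately show ?thesis using Zp_unique[OF z, of y x w] d by auto
    qed
  next
    assume "{x,y,w} = Gm"
    hence s: "z (-1) \<subseteq> {x,y,w}" using Gm by simp
    have c: "card (z (-1)) = 2" using g edge2 unfolding good3_def by blast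
    have "z (-1) \<noteq> z 0" using g unfolding good3_def by simp
    hence "z (-1) \<noteq> {x,y}" using z0 by simp
    hence o: "z (-1) = {y,w} \<or> z (-1) = {x,w}" using sub2_of3[OF c s] by blast
    define z' where "z' = zshift (-1) z"
    have z': "is_zigzag Fs z'" "z' 0 = z (-1)" "z' 1 = z 0"
      using zig_shift[OF z] unfolding z'_def by (blast, simp_all add: zshift_def)
    have zz: "z = zshift 1 z'" unfolding z'_def by (simp add: shift_shift shift0)
    from o show ?thesis
    proof
      assume h: "z (-1) = {y,w}"
      have "{w,y,x} \<in> Fs" using F by (simp add: insert_commute)
      moreover have "z' 0 = {w,y}" "z' 1 = {y,x}" using z' h z0 by (auto simp: insert_commute)
      ultimately have "z' = Zp w y x" using Zp_unique[OF z'(1), of w y x] d by auto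
      thus ?thesis using zz by simp
    next
      assume h: "z (-1) = {x,w}"
      have "{w,x,y} \<in> Fs" using F by (simp add: insert_commute)
      moreover have "z' 0 = {w,x}" "z' 1 = {x,y}" using z' h z0 by (auto simp: insert_commute)
      ultimately have "z' = Zp w x y" using Zp_unique[OF z'(1), of w x y] d by auto
      thus ?thesis using zz by simp
    qed
  qed
qed


lemma types_of_pair:
  assumes "passages T e = {q1,q2}" "q1 \<noteq> q2"
  shows "(edge_type_II T e \<longleftrightarrow> pdir q1 = pdir q2) \<and> (edge_type_I T e \<longleftrightarrow> pdir q1 \<noteq> pdir q2) \<and>
         (type_II_directed T e u v \<longleftrightarrow> pdir q1 = (u,v) \<and> pdir q2 = (u,v))"
  using assms unfolding edge_type_I_def edge_type_II_def type_II_directed_def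
  by (auto simp: doubleton_eq_iff)

lemma zig_m1_1: "is_zigzag Fs z \<Longrightarrow> z (-1) \<inter> z 1 = {}"
  using zig3[of z 0 "-1" 1] unfolding good3_def by simp

lemma edge_facts:
  assumes d: "x\<noteq>y" "y\<noteq>w" "x\<noteq>w" and F: "{x,y,w} \<in> Fs"
  shows "(edge_type_II T {x,y} \<longleftrightarrow> (X x y w \<longleftrightarrow> X w x y)) \<and>
         (edge_type_I T {x,y} \<longleftrightarrow> \<not> (X x y w \<longleftrightarrow> X w x y)) \<and>
         (type_II_directed T {x,y} x y \<longleftrightarrow> X x y w \<and> X w x y)"
proof -
  have F1: "{y,x,w} \<in> Fs" "{w,x,y} \<in> Fs" "{w,y,x} \<in> Fs" using F by (auto simp: insert_commute)
  have A: "is_zigzag Fs (Zp x y w)" "Zp x y w 0 = {x,y}" "Zp x y w 1 = {y,w}" using Zp[OF d F] by auto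
  have B: "is_zigzag Fs (Zp y x w)" "Zp y x w 0 = {y,x}" "Zp y x w 1 = {x,w}" using Zp[OF _ _ _ F1(1)] d by auto
  have C: "is_zigzag Fs (Zp w x y)" "Zp w x y 0 = {w,x}" "Zp w x y 1 = {x,y}" using Zp[OF _ _ _ F1(2)] d by auto
  have D: "is_zigzag Fs (Zp w y x)" "Zp w y x 0 = {w,y}" "Zp w y x 1 = {y,x}" using Zp[OF _ _ _ F1(3)] d by auto
  have sh: "zshift 1 z 0 = z 1" "zshift 1 z (-1) = z 0" for z :: "int \<Rightarrow> 'v set" unfolding zshift_def by simp_all
  have C': "is_zigzag Fs (zshift 1 (Zp w x y))" using zig_shift C by blast
  have D': "is_zigzag Fs (zshift 1 (Zp w y x))" using zig_shift D by blast
  have r1: "X w y x \<longleftrightarrow> \<not> X x y w" using X_rev[OF d F] by blast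
  have r2: "X y x w \<longleftrightarrow> \<not> X w x y" using X_rev[of w x y] F1 d by blast
  have mA: "Zp x y w \<in> T \<longleftrightarrow> X x y w" unfolding X_def ..
  have mB: "Zp y x w \<in> T \<longleftrightarrow> \<not> X w x y" using r2 unfolding X_def by blast
  have mC: "zshift 1 (Zp w x y) \<in> T \<longleftrightarrow> X w x y" using T_shift_iff unfolding X_def by blast
  have mD: "zshift 1 (Zp w y x) \<in> T \<longleftrightarrow> \<not> X x y w" using T_shift_iff r1 unfolding X_def by blast
  define q1 where "q1 = (if X x y w then Zp x y w else zshift 1 (Zp w y x))"
  define q2 where "q2 = (if X w x y then zshift 1 (Zp w x y) else Zp y x w)"
  have P: "passages T {x,y} = {q1,q2}"
  proof
    show "passages T {x,y} \<subseteq> {q1,q2}"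
    proof
      fix z assume "z \<in> passages T {x,y}"
      hence zT: "z \<in> T" and z0: "z 0 = {x,y}" unfolding passages_def by auto
      show "z \<in> {q1,q2}" using passage_cases[OF d F zT z0] zT mA mB mC mD
        unfolding q1_def q2_def by auto
    qed
  next
    show "{q1,q2} \<subseteq> passages T {x,y}" unfolding passages_def q1_def q2_def
      using mA mB mC mD A B C D sh by (auto simp: insert_commute)
  qed
  have q1p: "q1 1 = {y,w} \<or> q1 (-1) = {w,y}" unfolding q1_def using A D sh by auto
  have q2p: "q2 (-1) = {w,x} \<or> q2 1 = {x,w}" unfolding q2_def using B C sh by auto
  have q1z: "is_zigzag Fs q1" unfolding q1_def using A D' by auto
  have ne: "q1 \<noteq> q2"
  proof
    assume e: "q1 = q2"
    have "q1 (-1) \<inter> q1 1 = {}" using zig_m1_1[OF q1z] .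
    thus False using q1p q2p e d by (auto simp: doubleton_eq_iff)
  qed
  have pd1: "pdir q1 = (if X x y w then (x,y) else (y,x))"
    unfolding q1_def using pdir_fw[OF A d] pdir_bw[OF D', of w y x] D sh d by auto
  have pd2: "pdir q2 = (if X w x y then (x,y) else (y,x))"
    unfolding q2_def using pdir_bw[OF C', of w x y] pdir_fw[OF B] C sh d by auto
  show ?thesis using types_of_pair[OF P ne, of x y] pd1 pd2 d by auto
qed

end

lemma perm6:
  assumes "{a',b',c'} = {a,b,c}" "a'\<noteq>b'" "b'\<noteq>c'" "a'\<noteq>c'" "a\<noteq>b" "b\<noteq>c" "a\<noteq>c"
  shows "(a',b',c') = (a,b,c) \<or> (a',b',c') = (b,c,a) \<or> (a',b',c') = (c,a,b) \<or>
         (a',b',c') = (c,b,a) \<or> (a',b',c') = (b,a,c) \<or> (a',b',c') = (a,c,b)"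
proof -
  have "a' \<in> {a,b,c}" "b' \<in> {a,b,c}" "c' \<in> {a,b,c}" "a \<in> {a',b',c'}" "b \<in> {a',b',c'}" "c \<in> {a',b',c'}"
    using assms(1) by blast+
  thus ?thesis using assms(2-7) by auto
qed

theorem proposition1:
  fixes V :: "'v set" and Fs :: "'v set set" and T :: "(int \<Rightarrow> 'v set) set"
  assumes "triangulation V Fs"
    and "z_orientation Fs T"
    and "F \<in> Fs"
  shows "(\<exists>a b c. F = {a, b, c} \<and> a \<noteq> b \<and> b \<noteq> c \<and> a \<noteq> c \<and>
            edge_type_II T {a, b} \<and> edge_type_I T {b, c} \<and> edge_type_I T {c, a})
       \<noteq> (\<exists>a b c. F = {a, b, c} \<and> a \<noteq> b \<and> b \<noteq> c \<and> a \<noteq> c \<and>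
            type_II_directed T {a, b} a b \<and> type_II_directed T {b, c} b c \<and>
            type_II_directed T {c, a} c a)"
proof -
  interpret zo Fs T
    using assms(1,2) unfolding triangulation_def by unfold_locales auto
  obtain a b c where d: "a\<noteq>b" "b\<noteq>c" "a\<noteq>c" and Fe: "F = {a,b,c}" using face3[OF assms(3)] by metis
  have Fp: "{a,b,c} \<in> Fs" "{b,c,a} \<in> Fs" "{c,a,b} \<in> Fs" "{c,b,a} \<in> Fs" "{b,a,c} \<in> Fs" "{a,c,b} \<in> Fs"
    using assms(3) Fe by (auto simp: insert_commute)
  have rv: "X c b a \<longleftrightarrow> \<not> X a b c" "X a c b \<longleftrightarrow> \<not> X b c a" "X b a c \<longleftrightarrow> \<not> X c a b"
    using X_rev[OF _ _ _ Fp(1)] X_rev[OF _ _ _ Fp(2)] X_rev[OF _ _ _ Fp(3)] d by auto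
  note E1 = edge_facts[OF _ _ _ Fp(1)] and E2 = edge_facts[OF _ _ _ Fp(2)]
    and E3 = edge_facts[OF _ _ _ Fp(3)] and E4 = edge_facts[OF _ _ _ Fp(4)]
    and E5 = edge_facts[OF _ _ _ Fp(5)] and E6 = edge_facts[OF _ _ _ Fp(6)]
  have E: "(edge_type_II T {a,b} \<longleftrightarrow> (X a b c \<longleftrightarrow> X c a b))"
    "(edge_type_I T {a,b} \<longleftrightarrow> \<not>(X a b c \<longleftrightarrow> X c a b))"
    "(type_II_directed T {a,b} a b \<longleftrightarrow> X a b c \<and> X c a b)"
    "(edge_type_II T {b,c} \<longleftrightarrow> (X b c a \<longleftrightarrow> X a b c))"
    "(edge_type_I T {b,c} \<longleftrightarrow> \<not>(X b c a \<longleftrightarrow> X a b c))"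
    "(type_II_directed T {b,c} b c \<longleftrightarrow> X b c a \<and> X a b c)"
    "(edge_type_II T {c,a} \<longleftrightarrow> (X c a b \<longleftrightarrow> X b c a))"
    "(edge_type_I T {c,a} \<longleftrightarrow> \<not>(X c a b \<longleftrightarrow> X b c a))"
    "(type_II_directed T {c,a} c a \<longleftrightarrow> X c a b \<and> X b c a)"
    "(edge_type_II T {c,b} \<longleftrightarrow> (X c b a \<longleftrightarrow> X a c b))"
    "(edge_type_I T {c,b} \<longleftrightarrow> \<not>(X c b a \<longleftrightarrow> X a c b))"
    "(type_II_directed T {c,b} c b \<longleftrightarrow> X c b a \<and> X a c b)"
    "(edge_type_II T {b,a} \<longleftrightarrow> (X b a c \<longleftrightarrow> X c b a))"
    "(edge_type_I T {b,a} \<longleftrightarrow> \<not>(X b a c \<longleftrightarrow> X c b a))"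
    "(type_II_directed T {b,a} b a \<longleftrightarrow> X b a c \<and> X c b a)"
    "(edge_type_II T {a,c} \<longleftrightarrow> (X a c b \<longleftrightarrow> X b a c))"
    "(edge_type_I T {a,c} \<longleftrightarrow> \<not>(X a c b \<longleftrightarrow> X b a c))"
    "(type_II_directed T {a,c} a c \<longleftrightarrow> X a c b \<and> X b a c)"
    using E1 E2 E3 E4 E5 E6 d by auto
  let ?P = "X a b c" and ?Q = "X b c a" and ?R = "X c a b"
  have L: "(\<exists>a' b' c'. F = {a', b', c'} \<and> a' \<noteq> b' \<and> b' \<noteq> c' \<and> a' \<noteq> c' \<and>
            edge_type_II T {a', b'} \<and> edge_type_I T {b', c'} \<and> edge_type_I T {c', a'})
        \<longleftrightarrow> \<not> (?P = ?Q \<and> ?Q = ?R)"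
  proof
    assume "\<exists>a' b' c'. F = {a', b', c'} \<and> a' \<noteq> b' \<and> b' \<noteq> c' \<and> a' \<noteq> c' \<and>
            edge_type_II T {a', b'} \<and> edge_type_I T {b', c'} \<and> edge_type_I T {c', a'}"
    then obtain a' b' c' where h: "F = {a', b', c'}" "a' \<noteq> b'" "b' \<noteq> c'" "a' \<noteq> c'"
      "edge_type_II T {a', b'}" "edge_type_I T {b', c'}" "edge_type_I T {c', a'}" by blast
    have "(a',b',c') = (a,b,c) \<or> (a',b',c') = (b,c,a) \<or> (a',b',c') = (c,a,b) \<or>
         (a',b',c') = (c,b,a) \<or> (a',b',c') = (b,a,c) \<or> (a',b',c') = (a,c,b)"
      using perm6[of a' b' c' a b c] h Fe d by simp
    thus "\<not> (?P = ?Q \<and> ?Q = ?R)" using h(5-7) E rv by (elim disjE) auto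
  next
    assume n: "\<not> (?P = ?Q \<and> ?Q = ?R)"
    consider "?P = ?R" | "?P = ?Q" | "?Q = ?R" using n by blast
    thus "\<exists>a' b' c'. F = {a', b', c'} \<and> a' \<noteq> b' \<and> b' \<noteq> c' \<and> a' \<noteq> c' \<and>
            edge_type_II T {a', b'} \<and> edge_type_I T {b', c'} \<and> edge_type_I T {c', a'}"
    proof cases
      case 1 thus ?thesis using n E d Fe by blast
    next
      case 2
      hence "F = {b,c,a} \<and> b \<noteq> c \<and> c \<noteq> a \<and> b \<noteq> a \<and>
            edge_type_II T {b, c} \<and> edge_type_I T {c, a} \<and> edge_type_I T {a, b}"
        using n E d Fe by (auto simp: insert_commute)
      thus ?thesis by blast
    next
      case 3
      hence "F = {c,a,b} \<and> c \<noteq> a \<and> a \<noteq> b \<and> c \<noteq> b \<and>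
            edge_type_II T {c, a} \<and> edge_type_I T {a, b} \<and> edge_type_I T {b, c}"
        using n E d Fe by (auto simp: insert_commute)
      thus ?thesis by blast
    qed
  qed
  have R: "(\<exists>a' b' c'. F = {a', b', c'} \<and> a' \<noteq> b' \<and> b' \<noteq> c' \<and> a' \<noteq> c' \<and>
            type_II_directed T {a', b'} a' b' \<and> type_II_directed T {b', c'} b' c' \<and>
            type_II_directed T {c', a'} c' a')
        \<longleftrightarrow> (?P = ?Q \<and> ?Q = ?R)"
  proof
    assume "\<exists>a' b' c'. F = {a', b', c'} \<and> a' \<noteq> b' \<and> b' \<noteq> c' \<and> a' \<noteq> c' \<and>
            type_II_directed T {a', b'} a' b' \<and> type_II_directed T {b', c'} b' c' \<and>
            type_II_directed T {c', a'} c' a'"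
    then obtain a' b' c' where h: "F = {a', b', c'}" "a' \<noteq> b'" "b' \<noteq> c'" "a' \<noteq> c'"
      "type_II_directed T {a', b'} a' b'" "type_II_directed T {b', c'} b' c'"
      "type_II_directed T {c', a'} c' a'" by blast
    have "(a',b',c') = (a,b,c) \<or> (a',b',c') = (b,c,a) \<or> (a',b',c') = (c,a,b) \<or>
         (a',b',c') = (c,b,a) \<or> (a',b',c') = (b,a,c) \<or> (a',b',c') = (a,c,b)"
      using perm6[of a' b' c' a b c] h Fe d by simp
    thus "?P = ?Q \<and> ?Q = ?R" using h(5-7) E rv by (elim disjE) auto
  next
    assume n: "?P = ?Q \<and> ?Q = ?R"
    show "\<exists>a' b' c'. F = {a', b', c'} \<and> a' \<noteq> b' \<and> b' \<noteq> c' \<and> a' \<noteq> c' \<and>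
            type_II_directed T {a', b'} a' b' \<and> type_II_directed T {b', c'} b' c' \<and>
            type_II_directed T {c', a'} c' a'"
    proof (cases ?P)
      case True thus ?thesis using n E d Fe by blast
    next
      case False
      hence "F = {c,b,a} \<and> c \<noteq> b \<and> b \<noteq> a \<and> c \<noteq> a \<and>
            type_II_directed T {c, b} c b \<and> type_II_directed T {b, a} b a \<and>
            type_II_directed T {a, c} a c"
        using n E rv d Fe by (auto simp: insert_commute)
      thus ?thesis by blast
    qed
  qed
  show ?thesis using L R by blast
qed

end
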